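(* Let $n$ be a positive multiple of $4$, $\gamma\in\mathbb{R}$, $|\chi(\gamma)\rangle=\left(\cos(\gamma/4)|0\rangle^{\otimes4}+\sin(\gamma/4)|1\rangle^{\otimes 4}\right)^{\otimes n/4}$ and $\rho_\gamma=|\chi(\gamma)\rangle\langle\chi(\gamma)|$. Define $N_0=1$, $N_2(\gamma)=N_6(\gamma)=4\cos^2(\gamma/2)$, $N_4(\gamma)=6+8\sin^2(\gamma/2)$, $N_8=1$. Then for $\alpha\in\{0,\dots,2n\}$, $$\mathcal{P}_\alpha(\rho_\gamma)=\frac{1}{2^n}\sum_{\substack{i_0,i_2,i_4,i_6,i_8\ge0\\ i_0+i_2+i_4+i_6+i_8=n/4\\ 2i_2+4i_4+6i_6+8i_8=\alpha}}\frac{(n/4)!}{i_0!\,i_2!\,i_4!\,i_6!\,i_8!}\,N_2(\gamma)^{i_2}N_4(\gamma)^{i_4}N_6(\gamma)^{i_6}N_8^{i_8}.$$ In particular $\mathcal{P}_\alpha(\rho_\gamma)=0$ for odd $\alpha$.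
   Context: On $\mathcal{H}=(\mathbb{C}^2)^{\otimes n}$ define the Majorana operators $c_{2j-1}=Z^{\otimes(j-1)}\otimes X\otimes\mathbb{1}^{\otimes(n-j)}$ and $c_{2j}=Z^{\otimes(j-1)}\otimes Y\otimes\mathbb{1}^{\otimes(n-j)}$ for $j=1,\dots,n$. For $\alpha=0,\dots,2n$, $\mathcal{L}_\alpha\subseteq\mathcal{L}(\mathcal{H})$ is the span of the products $c_{i_1}\cdots c_{i_\alpha}$ with $1\le i_1<\dots<i_\alpha\le 2n$. The orthonormal basis used consists of the Hermitian Pauli strings (up to sign) in $\mathcal{L}_\alpha$ divided by $\sqrt{2^n}$, and $\mathcal{P}_\alpha(\rho)=\sum_\mu\mathrm{Tr}[B^\mu\rho]^2$ over this basis. *)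

theory Defs
  imports Complex_Main
begin

text \<open>Operators on (C^2)^{tensor n} are represented by their matrix entries
  in the computational basis, indexed by bitstrings (bool lists of length n;
  list position q is qubit q+1, True = |1>).\<close>

type_synonym op = "bool list \<Rightarrow> bool list \<Rightarrow> complex"

definition bitstrings :: "nat \<Rightarrow> bool list set" where
  "bitstrings n = {xs. length xs = n}"

text \<open>Single-qubit Paulis: 0 = identity, 1 = X, 2 = Y, 3 = Z.\<close>
definition sigma :: "nat \<Rightarrow> bool \<Rightarrow> bool \<Rightarrow> complex" where
  "sigma k a b =
     (if k = 0 then (if a = b then 1 else 0)
      else if k = 1 then (if a = b then 0 else 1)
      else if k = 2 then (if a = b then 0 else if a then \<i> else - \<i>)
      else (if a = b then (if a then -1 else 1) else 0))"

definition opmul :: "nat \<Rightarrow> op \<Rightarrow> op \<Rightarrow> op" where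
  "opmul n A B = (\<lambda>x y. \<Sum>z\<in>bitstrings n. A x z * B z y)"

definition opid :: op where
  "opid = (\<lambda>x y. if x = y then 1 else 0)"

definition trace :: "nat \<Rightarrow> op \<Rightarrow> complex" where
  "trace n A = (\<Sum>x\<in>bitstrings n. A x x)"

text \<open>Majorana operator c_m, m = 1..2n:
  c_{2j-1} = Z^{j-1} X 1^{n-j}, c_{2j} = Z^{j-1} Y 1^{n-j}.\<close>
definition majorana :: "nat \<Rightarrow> nat \<Rightarrow> op" where
  "majorana n m = (\<lambda>x y. \<Prod>q<n.
     sigma (if q < (m - 1) div 2 then 3
            else if q = (m - 1) div 2 then (if odd m then 1 else 2)
            else 0) (x ! q) (y ! q))"

definition mono :: "nat \<Rightarrow> nat set \<Rightarrow> op" where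
  "mono n S = foldr (opmul n) (map (majorana n) (sorted_list_of_set S)) opid"

definition in_L :: "nat \<Rightarrow> nat \<Rightarrow> op \<Rightarrow> bool" where
  "in_L n \<alpha> A \<longleftrightarrow> (\<exists>c :: nat set \<Rightarrow> complex.
     \<forall>x\<in>bitstrings n. \<forall>y\<in>bitstrings n.
       A x y = (\<Sum>S\<in>{S. S \<subseteq> {1..2*n} \<and> card S = \<alpha>}. c S * mono n S x y))"

definition pauli_strings :: "nat \<Rightarrow> nat list set" where
  "pauli_strings n = {p. length p = n \<and> set p \<subseteq> {0..<4}}"

definition pauli_op :: "nat \<Rightarrow> nat list \<Rightarrow> op" where
  "pauli_op n p = (\<lambda>x y. \<Prod>q<n. sigma (p ! q) (x ! q) (y ! q))"

text \<open>P_alpha(rho) = sum over the basis B = P / sqrt(2^n), P a Hermitian Pauli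
  string in L_alpha, of Tr[B rho]^2.\<close>
definition P_alpha :: "nat \<Rightarrow> nat \<Rightarrow> op \<Rightarrow> complex" where
  "P_alpha n \<alpha> \<rho> = (\<Sum>p\<in>{p\<in>pauli_strings n. in_L n \<alpha> (pauli_op n p)}.
     (trace n (opmul n (\<lambda>x y. pauli_op n p x y / complex_of_real (sqrt (2 ^ n))) \<rho>)) ^ 2)"

definition chi :: "nat \<Rightarrow> real \<Rightarrow> bool list \<Rightarrow> complex" where
  "chi n \<gamma> x = (\<Prod>b<n div 4.
     if (\<forall>k<4. \<not> x ! (4*b+k)) then complex_of_real (cos (\<gamma>/4))
     else if (\<forall>k<4. x ! (4*b+k)) then complex_of_real (sin (\<gamma>/4))
     else 0)"

definition rho_gamma :: "nat \<Rightarrow> real \<Rightarrow> op" where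
  "rho_gamma n \<gamma> = (\<lambda>x y. chi n \<gamma> x * cnj (chi n \<gamma> y))"

definition N2 :: "real \<Rightarrow> real" where "N2 \<gamma> = 4 * (cos (\<gamma>/2))^2"
definition N4 :: "real \<Rightarrow> real" where "N4 \<gamma> = 6 + 8 * (sin (\<gamma>/2))^2"
definition N6 :: "real \<Rightarrow> real" where "N6 \<gamma> = 4 * (cos (\<gamma>/2))^2"
definition N8 :: real where "N8 = 1"

end

theory Submission
  imports Defs "HOL-Computational_Algebra.Polynomial"
begin

lemma finite_bitstrings[simp]: "finite (bitstrings n)"
  unfolding bitstrings_def by (rule finite_list_length)

lemma bitstrings_0: "bitstrings 0 = {[]}"
  by (auto simp: bitstrings_def)

lemma bitstrings_1: "bitstrings (Suc 0) = {[False],[True]}"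
  apply (auto simp: bitstrings_def)
  by (metis (full_types) length_0_conv length_Suc_conv)

lemma bitstrings_add: "bitstrings (n + k) = (\<lambda>(x,y). x @ y) ` (bitstrings n \<times> bitstrings k)"
proof
  show "bitstrings (n + k) \<subseteq> (\<lambda>(x,y). x @ y) ` (bitstrings n \<times> bitstrings k)"
  proof
    fix z assume "z \<in> bitstrings (n + k)"
    then have "z = (\<lambda>(x,y). x @ y) (take n z, drop n z)" "(take n z, drop n z) \<in> bitstrings n \<times> bitstrings k"
      by (auto simp: bitstrings_def)
    then show "z \<in> (\<lambda>(x,y). x @ y) ` (bitstrings n \<times> bitstrings k)" by blast
  qed
qed (auto simp: bitstrings_def)

lemma inj_append: "inj_on (\<lambda>(x,y). x @ y) (bitstrings n \<times> bitstrings k)"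
  by (auto simp: inj_on_def bitstrings_def)

lemma sum_bitstrings_add:
  "(\<Sum>z\<in>bitstrings (n+k). f z) = (\<Sum>x\<in>bitstrings n. \<Sum>y\<in>bitstrings k. f (x @ y))"
  unfolding bitstrings_add sum.reindex[OF inj_append] by (simp add: sum.cartesian_product split_def)

lemma sum_lessThan_add: "(\<Sum>q<n+(k::nat). f q) = (\<Sum>q<n. f q) + (\<Sum>j<k. f (n+j))"
  by (induction k) (auto simp: add.assoc)

lemma prod_lessThan_add: "(\<Prod>q<n+(k::nat). f q) = (\<Prod>q<n. f q) * (\<Prod>j<k. f (n+j))"
  by (induction k) (auto simp: mult.assoc)

lemma sum_prod_bitstrings:
  fixes f :: "nat \<Rightarrow> bool \<Rightarrow> 'a::comm_semiring_1"
  shows "(\<Sum>x\<in>bitstrings n. \<Prod>q<n. f q (x!q)) = (\<Prod>q<n. f q False + f q True)"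
proof (induction n)
  case 0
  then show ?case by (simp add: bitstrings_0)
next
  case (Suc n)
  have "(\<Sum>x\<in>bitstrings (Suc n). \<Prod>q<Suc n. f q (x!q))
      = (\<Sum>x\<in>bitstrings n. \<Sum>y\<in>bitstrings (Suc 0). \<Prod>q<Suc n. f q ((x@y)!q))"
    using sum_bitstrings_add[where n=n and k="Suc 0"] by simp
  also have "\<dots> = (\<Sum>x\<in>bitstrings n. (\<Prod>q<n. f q (x!q)) * (f n False + f n True))"
  proof (rule sum.cong)
    fix x assume x: "x \<in> bitstrings n"
    then have l: "length x = n" by (simp add: bitstrings_def)
    have e: "\<And>b. (\<Prod>q<n. f q ((x@[b])!q)) = (\<Prod>q<n. f q (x!q))"
      by (rule prod.cong) (auto simp: nth_append l)
    have e2: "\<And>b. (x@[b])!n = b" using l by auto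
    show "(\<Sum>y\<in>bitstrings (Suc 0). \<Prod>q<Suc n. f q ((x@y)!q)) = (\<Prod>q<n. f q (x!q)) * (f n False + f n True)"
      by (simp add: bitstrings_1 e e2 distrib_left)
  qed simp
  also have "\<dots> = (\<Prod>q<Suc n. f q False + f q True)"
    by (simp add: Suc sum_distrib_right[symmetric])
  finally show ?case .
qed

lemma sum2_prod_bitstrings:
  fixes f :: "nat \<Rightarrow> bool \<Rightarrow> bool \<Rightarrow> 'a::comm_semiring_1"
  shows "(\<Sum>x\<in>bitstrings n. \<Sum>y\<in>bitstrings n. \<Prod>q<n. f q (x!q) (y!q))
       = (\<Prod>q<n. f q False False + f q False True + f q True False + f q True True)"
proof -
  have "(\<Sum>x\<in>bitstrings n. \<Sum>y\<in>bitstrings n. \<Prod>q<n. f q (x!q) (y!q))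
      = (\<Sum>x\<in>bitstrings n. \<Prod>q<n. f q (x!q) False + f q (x!q) True)"
    by (rule sum.cong) (auto simp: sum_prod_bitstrings[of "\<lambda>q b. f q (x!q) b" for x])
  also have "\<dots> = (\<Prod>q<n. f q False False + f q False True + (f q True False + f q True True))"
    by (simp add: sum_prod_bitstrings[of "\<lambda>q a. f q a False + f q a True"])
  finally show ?thesis by (simp add: add.assoc)
qed

definition xb :: "nat \<Rightarrow> bool" where "xb a = (a = 1 \<or> a = 2)"
definition zb :: "nat \<Rightarrow> bool" where "zb a = (2 \<le> a)"
definition pidx :: "bool \<Rightarrow> bool \<Rightarrow> nat" where
  "pidx x z = (if x then (if z then 2 else 1) else (if z then 3 else 0))"
definition pm :: "nat \<Rightarrow> nat \<Rightarrow> nat" where "pm a b = pidx (xb a \<noteq> xb b) (zb a \<noteq> zb b)"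
definition ph1 :: "nat \<Rightarrow> nat \<Rightarrow> complex" where
  "ph1 a b = (if (a,b) = (1,2) \<or> (a,b) = (2,3) \<or> (a,b) = (3,1) then \<i>
     else if (a,b) = (2,1) \<or> (a,b) = (3,2) \<or> (a,b) = (1,3) then - \<i> else 1)"

lemma xb_pidx[simp]: "xb (pidx x z) = x" and zb_pidx[simp]: "zb (pidx x z) = z"
  by (auto simp: xb_def zb_def pidx_def)
lemma pidx_lt[simp]: "pidx x z < 4" by (auto simp: pidx_def)
lemma pidx_xb_zb: "a < 4 \<Longrightarrow> pidx (xb a) (zb a) = a"
  by (auto simp: xb_def zb_def pidx_def)
lemma ph1_nz: "ph1 a b \<noteq> 0" by (auto simp: ph1_def)

lemma less4_cases: "(a::nat) < 4 \<Longrightarrow> a = 0 \<or> a = 1 \<or> a = 2 \<or> a = 3" by auto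

lemma sigma_mult1:
  assumes "a < 4" "b < 4"
  shows "sigma a x False * sigma b False y + sigma a x True * sigma b True y = ph1 a b * sigma (pm a b) x y"
  using less4_cases[OF assms(1)] less4_cases[OF assms(2)]
  by (cases x; cases y; auto simp: sigma_def ph1_def pm_def pidx_def xb_def zb_def)

lemma sigma_ortho1:
  assumes "a < 4" "b < 4"
  shows "cnj (sigma a False False) * sigma b False False + cnj (sigma a False True) * sigma b False True
       + cnj (sigma a True False) * sigma b True False + cnj (sigma a True True) * sigma b True True
       = (if a = b then 2 else 0)"
  using less4_cases[OF assms(1)] less4_cases[OF assms(2)]
  by (auto simp: sigma_def)

definition pf :: "nat \<Rightarrow> (nat \<Rightarrow> nat) \<Rightarrow> op" where
  "pf n f = (\<lambda>x y. \<Prod>q<n. sigma (f q) (x!q) (y!q))"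

lemma pauli_op_pf: "pauli_op n p = pf n (\<lambda>q. p!q)"
  by (simp add: pauli_op_def pf_def)

definition mj :: "nat \<Rightarrow> nat \<Rightarrow> nat" where
  "mj m q = (if q < (m - 1) div 2 then 3 else if q = (m - 1) div 2 then (if odd m then 1 else 2) else 0)"

lemma mj_lt[simp]: "mj m q < 4" by (simp add: mj_def)

lemma majorana_pf: "majorana n m = pf n (mj m)"
  by (simp add: majorana_def pf_def mj_def)

lemma opmul_pf:
  assumes "\<forall>q<n. f q < 4 \<and> g q < 4"
  shows "opmul n (pf n f) (\<lambda>x y. c * pf n g x y) x y
       = c * (\<Prod>q<n. ph1 (f q) (g q)) * pf n (\<lambda>q. pm (f q) (g q)) x y"
proof -
  have "opmul n (pf n f) (\<lambda>x y. c * pf n g x y) x y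
      = c * (\<Sum>z\<in>bitstrings n. \<Prod>q<n. sigma (f q) (x!q) (z!q) * sigma (g q) (z!q) (y!q))"
    by (simp add: opmul_def pf_def prod.distrib sum_distrib_left mult_ac)
  also have "\<dots> = c * (\<Prod>q<n. ph1 (f q) (g q) * sigma (pm (f q) (g q)) (x!q) (y!q))"
    by (simp add: sum_prod_bitstrings[of "\<lambda>q b. sigma (f q) (x!q) b * sigma (g q) b (y!q)"] sigma_mult1 assms)
  finally show ?thesis by (simp add: prod.distrib pf_def mult_ac)
qed

lemma ortho_pf:
  assumes "\<forall>q<n. f q < 4 \<and> g q < 4"
  shows "(\<Sum>x\<in>bitstrings n. \<Sum>y\<in>bitstrings n. cnj (pf n f x y) * pf n g x y)
       = (if (\<forall>q<n. f q = g q) then 2 ^ n else 0)"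
proof -
  have "(\<Sum>x\<in>bitstrings n. \<Sum>y\<in>bitstrings n. cnj (pf n f x y) * pf n g x y)
     = (\<Sum>x\<in>bitstrings n. \<Sum>y\<in>bitstrings n. \<Prod>q<n. cnj (sigma (f q) (x!q) (y!q)) * sigma (g q) (x!q) (y!q))"
    by (simp add: pf_def prod.distrib)
  also have "\<dots> = (\<Prod>q<n. (if f q = g q then 2 else 0))"
    by (simp add: sum2_prod_bitstrings[of "\<lambda>q a b. cnj (sigma (f q) a b) * sigma (g q) a b"] sigma_ortho1 assms)
  also have "\<dots> = (if (\<forall>q<n. f q = g q) then 2 ^ n else 0)"
    by auto
  finally show ?thesis .
qed

lemma opid_pf: "x \<in> bitstrings n \<Longrightarrow> y \<in> bitstrings n \<Longrightarrow> opid x y = pf n (\<lambda>q. 0) x y"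
proof -
  assume x: "x \<in> bitstrings n" and y: "y \<in> bitstrings n"
  show ?thesis
  proof (cases "x = y")
    case True then show ?thesis by (simp add: opid_def pf_def sigma_def)
  next
    case False
    then obtain q where "q < n" "x!q \<noteq> y!q" using x y nth_equalityI[of x y]
      by (auto simp: bitstrings_def)
    then show ?thesis using False by (auto simp: opid_def pf_def sigma_def intro!: prod_zero)
  qed
qed

definition FL :: "nat list \<Rightarrow> nat \<Rightarrow> nat" where
  "FL L q = pidx (odd (length (filter (\<lambda>m. xb (mj m q)) L))) (odd (length (filter (\<lambda>m. zb (mj m q)) L)))"

lemma FL_lt[simp]: "FL L q < 4" by (simp add: FL_def)

lemma foldr_pf:
  "\<exists>c. c \<noteq> 0 \<and> (\<forall>x\<in>bitstrings n. \<forall>y\<in>bitstrings n.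
      foldr (opmul n) (map (majorana n) L) opid x y = c * pf n (FL L) x y)"
proof (induction L)
  case Nil
  then show ?case by (intro exI[of _ 1]) (auto simp: opid_pf FL_def pidx_def)
next
  case (Cons m L)
  then obtain c where c: "c \<noteq> 0" and h: "\<forall>x\<in>bitstrings n. \<forall>y\<in>bitstrings n.
      foldr (opmul n) (map (majorana n) L) opid x y = c * pf n (FL L) x y" by blast
  have pmF: "pm (mj m q) (FL L q) = FL (m # L) q" for q
    by (simp add: pm_def FL_def)
  show ?case
  proof (intro exI[of _ "c * (\<Prod>q<n. ph1 (mj m q) (FL L q))"] conjI ballI)
    show "c * (\<Prod>q<n. ph1 (mj m q) (FL L q)) \<noteq> 0" using c by (simp add: ph1_nz)
    fix x y assume x: "x \<in> bitstrings n" and y: "y \<in> bitstrings n"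
    have "foldr (opmul n) (map (majorana n) (m # L)) opid x y
        = opmul n (pf n (mj m)) (\<lambda>x y. c * pf n (FL L) x y) x y"
      using h y by (simp add: opmul_def majorana_pf)
    also have "\<dots> = c * (\<Prod>q<n. ph1 (mj m q) (FL L q)) * pf n (FL (m # L)) x y"
      by (simp add: opmul_pf pmF)
    finally show "foldr (opmul n) (map (majorana n) (m # L)) opid x y
        = c * (\<Prod>q<n. ph1 (mj m q) (FL L q)) * pf n (FL (m # L)) x y" .
  qed
qed

definition PX :: "nat set \<Rightarrow> nat \<Rightarrow> bool" where
  "PX S q = odd (card ({m. xb (mj m q)} \<inter> S))"
definition PZ :: "nat set \<Rightarrow> nat \<Rightarrow> bool" where
  "PZ S q = odd (card ({m. zb (mj m q)} \<inter> S))"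
definition PI :: "nat set \<Rightarrow> nat \<Rightarrow> nat" where
  "PI S q = pidx (PX S q) (PZ S q)"

lemma mono_ex: "finite S \<Longrightarrow> \<exists>c. c \<noteq> 0 \<and> (\<forall>x\<in>bitstrings n. \<forall>y\<in>bitstrings n.
      mono n S x y = c * pf n (PI S) x y)"
proof -
  assume S: "finite S"
  have "FL (sorted_list_of_set S) = PI S"
    using S by (auto simp: FL_def PI_def PX_def PZ_def distinct_length_filter)
  then show ?thesis using foldr_pf[of n "sorted_list_of_set S"] by (simp add: mono_def)
qed

definition monoc :: "nat \<Rightarrow> nat set \<Rightarrow> complex" where
  "monoc n S = (SOME c. c \<noteq> 0 \<and> (\<forall>x\<in>bitstrings n. \<forall>y\<in>bitstrings n.
      mono n S x y = c * pf n (PI S) x y))"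

lemma monoc: assumes "finite S"
  shows "monoc n S \<noteq> 0" "x \<in> bitstrings n \<Longrightarrow> y \<in> bitstrings n \<Longrightarrow> mono n S x y = monoc n S * pf n (PI S) x y"
  using someI_ex[OF mono_ex[OF assms, of n]] unfolding monoc_def[symmetric] by auto

definition ldeg :: "nat \<Rightarrow> bool \<Rightarrow> nat" where
  "ldeg a t = (let b2 = (zb a \<noteq> t); b1 = (xb a \<noteq> b2) in of_bool b1 + of_bool b2)"

definition tpar :: "nat list \<Rightarrow> nat \<Rightarrow> bool" where
  "tpar p q = odd (\<Sum>q'<length p. if q < q' then of_bool (xb (p!q')) else (0::nat))"

definition deg :: "nat list \<Rightarrow> nat" where
  "deg p = (\<Sum>q<length p. ldeg (p!q) (tpar p q))"

lemma sum_pairs: "sum h {1..2*(n::nat)} = (\<Sum>q<n. h (2*q+1) + h (2*q+2))"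
proof (induction n)
  case 0 then show ?case by simp
next
  case (Suc n)
  have "{1..2*Suc n} = insert (2*n+2) (insert (2*n+1) {1..2*n})" by auto
  then show ?case using Suc by (simp add: add_ac)
qed

lemma cardP:
  fixes S :: "nat set" and n :: nat
  assumes "S \<subseteq> {1..2*n}"
  shows "card {m\<in>S. P m} = (\<Sum>q<n. of_bool (2*q+1 \<in> S \<and> P (2*q+1)) + of_bool (2*q+2 \<in> S \<and> P (2*q+2)))"
proof -
  have "card {m\<in>S. P m} = card ({1..2*n} \<inter> {m. m \<in> S \<and> P m})"
    using assms by (intro arg_cong[where f=card]) auto
  also have "\<dots> = (\<Sum>m\<in>{1..2*n}. of_bool (m \<in> S \<and> P m))"
    by simp
  also have "\<dots> = (\<Sum>q<n. of_bool (2*q+1 \<in> S \<and> P (2*q+1)) + of_bool (2*q+2 \<in> S \<and> P (2*q+2)))"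
    by (rule sum_pairs)
  finally show ?thesis .
qed

lemma xb_mj_odd[simp]: "xb (mj (Suc (2*q')) q) = (q = q')"
  by (simp add: mj_def xb_def)
lemma zb_mj_odd[simp]: "zb (mj (Suc (2*q')) q) = (q < q')"
  by (simp add: mj_def zb_def)
lemma div_even_aux: "(Suc (Suc (2*q')) - 1) div 2 = q'" by presburger
lemma xb_mj_even[simp]: "xb (mj (Suc (Suc (2*q'))) q) = (q = q')"
  by (simp add: mj_def xb_def div_even_aux del: One_nat_def)
lemma zb_mj_even[simp]: "zb (mj (Suc (Suc (2*q'))) q) = (q \<le> q')"
  by (auto simp add: mj_def zb_def div_even_aux simp del: One_nat_def)

definition s1 :: "nat set \<Rightarrow> nat \<Rightarrow> bool" where "s1 S q = (2*q+1 \<in> S)"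
definition s2 :: "nat set \<Rightarrow> nat \<Rightarrow> bool" where "s2 S q = (2*q+2 \<in> S)"
definition Tq :: "nat \<Rightarrow> nat set \<Rightarrow> nat \<Rightarrow> nat" where
  "Tq n S q = (\<Sum>q'<n. if q < q' then of_bool (s1 S q') + of_bool (s2 S q') else 0)"

lemma PX_eq:
  assumes "S \<subseteq> {1..2*n}" "q < n"
  shows "PX S q = (s1 S q \<noteq> s2 S q)"
proof -
  have "card ({m. xb (mj m q)} \<inter> S) = card {m\<in>S. xb (mj m q)}"
    by (intro arg_cong[where f=card]) auto
  also have "\<dots> = (\<Sum>q'<n. if q' = q then of_bool (s1 S q') + of_bool (s2 S q') else 0)"
    unfolding cardP[OF assms(1)]
    by (rule sum.cong) (auto simp: s1_def s2_def)
  also have "\<dots> = of_bool (s1 S q) + of_bool (s2 S q)"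
    using assms(2) by simp
  finally show ?thesis by (simp add: PX_def)
qed

lemma PZ_eq:
  assumes "S \<subseteq> {1..2*n}" "q < n"
  shows "PZ S q = (s2 S q \<noteq> odd (Tq n S q))"
proof -
  have "card ({m. zb (mj m q)} \<inter> S) = card {m\<in>S. zb (mj m q)}"
    by (intro arg_cong[where f=card]) auto
  also have "\<dots> = (\<Sum>q'<n. (if q' = q then of_bool (s2 S q') else 0) + 
       (if q < q' then of_bool (s1 S q') + of_bool (s2 S q') else 0))"
    unfolding cardP[OF assms(1)]
    by (rule sum.cong) (auto simp: s1_def s2_def)
  also have "\<dots> = of_bool (s2 S q) + Tq n S q"
    using assms(2) by (simp add: sum.distrib Tq_def)
  finally show ?thesis by (simp add: PZ_def)
qed

lemma card_eq:
  assumes "S \<subseteq> {1..2*n}"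
  shows "card S = (\<Sum>q<n. of_bool (s1 S q) + of_bool (s2 S q))"
proof -
  have "card S = card {m\<in>S. True}" by simp
  also have "\<dots> = (\<Sum>q<n. of_bool (s1 S q) + of_bool (s2 S q))"
    unfolding cardP[OF assms] by (simp add: s1_def s2_def)
  finally show ?thesis .
qed

lemma odd_sum_cong:
  fixes f g :: "'a \<Rightarrow> nat"
  assumes "\<And>i. i \<in> A \<Longrightarrow> f i mod 2 = g i mod 2"
  shows "odd (sum f A) = odd (sum g A)"
proof -
  have "sum f A mod 2 = (\<Sum>i\<in>A. f i mod 2) mod 2" by (simp add: mod_sum_eq)
  also have "\<dots> = (\<Sum>i\<in>A. g i mod 2) mod 2" using assms by simp
  also have "\<dots> = sum g A mod 2" by (simp add: mod_sum_eq)
  finally show ?thesis by (simp add: odd_iff_mod_2_eq_one)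
qed

lemma tpar_Tq:
  assumes "length p = n" "\<forall>q<n. xb (p!q) = PX S q" "S \<subseteq> {1..2*n}"
  shows "tpar p q = odd (Tq n S q)"
  unfolding tpar_def Tq_def assms(1)
  by (rule odd_sum_cong) (use assms in \<open>auto simp: PX_eq\<close>)

lemma match_card:
  assumes S: "S \<subseteq> {1..2*n}" and l: "length p = n"
    and m: "\<forall>q<n. xb (p!q) = PX S q \<and> zb (p!q) = PZ S q"
  shows "card S = deg p"
proof -
  have "ldeg (p!q) (tpar p q) = of_bool (s1 S q) + of_bool (s2 S q)" if q: "q < n" for q
  proof -
    have "tpar p q = odd (Tq n S q)" using tpar_Tq[OF l _ S] m by auto
    moreover have "xb (p!q) = (s1 S q \<noteq> s2 S q)" "zb (p!q) = (s2 S q \<noteq> odd (Tq n S q))"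
      using m q PX_eq[OF S q] PZ_eq[OF S q] by auto
    ultimately show ?thesis by (auto simp: ldeg_def Let_def)
  qed
  then show ?thesis unfolding card_eq[OF S] deg_def l by simp
qed

lemma match_exists:
  assumes l: "length p = n"
  shows "\<exists>S \<subseteq> {1..2*n}. \<forall>q<n. xb (p!q) = PX S q \<and> zb (p!q) = PZ S q"
proof -
  define b2 where "b2 q = (zb (p!q) \<noteq> tpar p q)" for q
  define b1 where "b1 q = (xb (p!q) \<noteq> b2 q)" for q
  define S where "S = {m\<in>{1..2*n}. if odd m then b1 ((m-1) div 2) else b2 ((m-1) div 2)}"
  have S: "S \<subseteq> {1..2*n}" by (auto simp: S_def)
  have e1: "s1 S q = b1 q" if "q < n" for q
    using that by (auto simp: s1_def S_def)
  have e2: "s2 S q = b2 q" if "q < n" for q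
  proof -
    have "(2*q+2 - 1) div 2 = q" by presburger
    then show ?thesis using that by (auto simp: s2_def S_def)
  qed
  have Tq: "odd (Tq n S q) = tpar p q" for q
    unfolding tpar_def Tq_def l
    by (rule odd_sum_cong) (auto simp: e1 e2 b1_def)
  have "\<forall>q<n. xb (p!q) = PX S q \<and> zb (p!q) = PZ S q"
  proof (intro allI impI)
    fix q assume q: "q < n"
    show "xb (p!q) = PX S q \<and> zb (p!q) = PZ S q"
      using PX_eq[OF S q] PZ_eq[OF S q] e1[OF q] e2[OF q] Tq[of q]
      by (auto simp: b1_def b2_def)
  qed
  then show ?thesis using S by blast
qed

lemma PS_lt: "p \<in> pauli_strings n \<Longrightarrow> q < n \<Longrightarrow> p!q < 4"
proof -
  assume p: "p \<in> pauli_strings n" and q: "q < n"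
  then have "p!q \<in> set p" by (simp add: pauli_strings_def)
  then show ?thesis using p by (auto simp: pauli_strings_def)
qed

lemma PS_len: "p \<in> pauli_strings n \<Longrightarrow> length p = n"
  by (auto simp: pauli_strings_def)

lemma finite_Salpha: "finite {S. S \<subseteq> {1..2*(n::nat)} \<and> card S = \<alpha>}"
  by (rule finite_subset[of _ "Pow {1..2*n}"]) auto

lemma swap3: "(\<Sum>x\<in>X. \<Sum>y\<in>Y. \<Sum>z\<in>Z. F x y z) = (\<Sum>z\<in>Z. \<Sum>x\<in>X. \<Sum>y\<in>Y. F x y z)"
proof -
  have "\<And>x. (\<Sum>y\<in>Y. \<Sum>z\<in>Z. F x y z) = (\<Sum>z\<in>Z. \<Sum>y\<in>Y. F x y z)" by (rule sum.swap)
  then have "(\<Sum>x\<in>X. \<Sum>y\<in>Y. \<Sum>z\<in>Z. F x y z) = (\<Sum>x\<in>X. \<Sum>z\<in>Z. \<Sum>y\<in>Y. F x y z)" by simp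
  also have "\<dots> = (\<Sum>z\<in>Z. \<Sum>x\<in>X. \<Sum>y\<in>Y. F x y z)" by (rule sum.swap)
  finally show ?thesis .
qed

lemma inL_iff:
  assumes p: "p \<in> pauli_strings n"
  shows "in_L n \<alpha> (pauli_op n p) \<longleftrightarrow> \<alpha> = deg p"
proof
  assume "\<alpha> = deg p"
  obtain S where S: "S \<subseteq> {1..2*n}" and m: "\<forall>q<n. xb (p!q) = PX S q \<and> zb (p!q) = PZ S q"
    using match_exists[OF PS_len[OF p]] by blast
  have cS: "card S = \<alpha>" using match_card[OF S PS_len[OF p] m] \<open>\<alpha> = deg p\<close> by simp
  have fS: "finite S" using S finite_subset by blast
  have PI: "PI S q = p!q" if "q < n" for q
  proof -
    have "PI S q = pidx (xb (p!q)) (zb (p!q))" using m that by (simp add: PI_def)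
    then show ?thesis using pidx_xb_zb[OF PS_lt[OF p that]] by simp
  qed
  let ?c = "\<lambda>S'. if S' = S then inverse (monoc n S) else 0"
  show "in_L n \<alpha> (pauli_op n p)"
    unfolding in_L_def
  proof (intro exI[of _ ?c] ballI)
    fix x y assume x: "x \<in> bitstrings n" and y: "y \<in> bitstrings n"
    have "(\<Sum>S'\<in>{S. S \<subseteq> {1..2*n} \<and> card S = \<alpha>}. ?c S' * mono n S' x y) = inverse (monoc n S) * mono n S x y"
    proof -
      have "(\<Sum>S'\<in>{S. S \<subseteq> {1..2*n} \<and> card S = \<alpha>}. ?c S' * mono n S' x y)
         = (\<Sum>S'\<in>{S. S \<subseteq> {1..2*n} \<and> card S = \<alpha>}. if S' = S then inverse (monoc n S) * mono n S x y else 0)"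
        by (rule sum.cong) auto
      also have "\<dots> = inverse (monoc n S) * mono n S x y"
        using S cS finite_Salpha[of n \<alpha>] by (simp add: sum.delta)
      finally show ?thesis .
    qed
    also have "\<dots> = pf n (PI S) x y" using monoc(2)[OF fS x y] monoc(1)[OF fS, of n] by simp
    also have "\<dots> = pauli_op n p x y" unfolding pauli_op_pf pf_def
      by (rule prod.cong) (auto simp: PI)
    finally show "pauli_op n p x y = (\<Sum>S'\<in>{S. S \<subseteq> {1..2*n} \<and> card S = \<alpha>}. ?c S' * mono n S' x y)" by simp
  qed
next
  assume "in_L n \<alpha> (pauli_op n p)"
  then obtain c where c: "\<forall>x\<in>bitstrings n. \<forall>y\<in>bitstrings n.
       pauli_op n p x y = (\<Sum>S\<in>{S. S \<subseteq> {1..2*n} \<and> card S = \<alpha>}. c S * mono n S x y)"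
    unfolding in_L_def by blast
  let ?A = "{S. S \<subseteq> {1..2*n} \<and> card S = \<alpha>}"
  show "\<alpha> = deg p"
  proof (rule ccontr)
    assume ne: "\<alpha> \<noteq> deg p"
    have nm: "\<not> (\<forall>q<n. p!q = PI S q)" if "S \<in> ?A" for S
    proof
      assume h: "\<forall>q<n. p!q = PI S q"
      then have "\<forall>q<n. xb (p!q) = PX S q \<and> zb (p!q) = PZ S q" by (simp add: PI_def)
      then have "card S = deg p" using match_card[of S n p] that PS_len[OF p] by auto
      then show False using that ne by simp
    qed
    have lt: "\<forall>q<n. p!q < 4 \<and> p!q < 4" using PS_lt[OF p] by auto
    have "(2::complex) ^ n = (\<Sum>x\<in>bitstrings n. \<Sum>y\<in>bitstrings n. cnj (pf n ((!) p) x y) * pf n ((!) p) x y)"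
      using ortho_pf[OF lt] by simp
    also have "\<dots> = (\<Sum>x\<in>bitstrings n. \<Sum>y\<in>bitstrings n. \<Sum>S\<in>?A.
          c S * monoc n S * (cnj (pf n ((!) p) x y) * pf n (PI S) x y))"
    proof (intro sum.cong refl)
      fix x y assume x: "x \<in> bitstrings n" and y: "y \<in> bitstrings n"
      have "pf n ((!) p) x y = (\<Sum>S\<in>?A. c S * mono n S x y)" using c x y by (simp add: pauli_op_pf)
      also have "\<dots> = (\<Sum>S\<in>?A. c S * monoc n S * pf n (PI S) x y)"
      proof (intro sum.cong refl)
        fix S assume "S \<in> ?A"
        then have "finite S" using finite_subset[of S "{1..2*n}"] by auto
        then show "c S * mono n S x y = c S * monoc n S * pf n (PI S) x y"
          using monoc(2)[OF _ x y] by simp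
      qed
      finally have eq: "pf n ((!) p) x y = (\<Sum>S\<in>?A. c S * monoc n S * pf n (PI S) x y)" .
      have "cnj (pf n ((!) p) x y) * pf n ((!) p) x y = cnj (pf n ((!) p) x y) * (\<Sum>S\<in>?A. c S * monoc n S * pf n (PI S) x y)"
        by (rule arg_cong[OF eq])
      also have "\<dots> = (\<Sum>S\<in>?A. c S * monoc n S * (cnj (pf n ((!) p) x y) * pf n (PI S) x y))"
        by (simp add: sum_distrib_left mult_ac)
      finally show "cnj (pf n ((!) p) x y) * pf n ((!) p) x y = (\<Sum>S\<in>?A. c S * monoc n S * (cnj (pf n ((!) p) x y) * pf n (PI S) x y))" .
    qed
    also have "\<dots> = (\<Sum>S\<in>?A. c S * monoc n S * (\<Sum>x\<in>bitstrings n. \<Sum>y\<in>bitstrings n. cnj (pf n ((!) p) x y) * pf n (PI S) x y))"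
      by (subst swap3) (simp add: sum_distrib_left)
    also have "\<dots> = 0"
    proof (intro sum.neutral ballI)
      fix S assume S: "S \<in> ?A"
      have lt4: "\<forall>q<n. p!q < 4 \<and> PI S q < 4" using PS_lt[OF p] by (simp add: PI_def)
      then show "c S * monoc n S * (\<Sum>x\<in>bitstrings n. \<Sum>y\<in>bitstrings n. cnj (pf n ((!) p) x y) * pf n (PI S) x y) = 0"
        using ortho_pf[OF lt4] nm[OF S] by auto
    qed
    finally show False by simp
  qed
qed

definition E :: "nat \<Rightarrow> real \<Rightarrow> nat list \<Rightarrow> complex" where
  "E n \<gamma> p = (\<Sum>x\<in>bitstrings n. \<Sum>z\<in>bitstrings n. chi n \<gamma> x * pauli_op n p x z * chi n \<gamma> z)"

lemma chi_real: "cnj (chi n \<gamma> x) = chi n \<gamma> x"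
  by (simp add: chi_def if_distrib[of cnj] cong: if_cong)

lemma trace_eq:
  "trace n (opmul n (\<lambda>x y. pauli_op n p x y / c) (rho_gamma n \<gamma>)) = E n \<gamma> p / c"
proof -
  have e: "pauli_op n p x z / c * (chi n \<gamma> z * cnj (chi n \<gamma> x)) = chi n \<gamma> x * pauli_op n p x z * chi n \<gamma> z / c" for x z
    unfolding chi_real by (simp add: divide_inverse ac_simps)
  show ?thesis
    unfolding trace_def opmul_def rho_gamma_def E_def e by (simp add: sum_divide_distrib)
qed

lemma all4: "(\<forall>k<(4::nat). P k) = (P 0 \<and> P 1 \<and> P 2 \<and> P 3)"
proof -
  have h: "{..<(4::nat)} = {0,1,2,3}" by auto
  have "(\<forall>k<(4::nat). P k) = (\<forall>k\<in>{..<4}. P k)" by (simp add: lessThan_def)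
  also have "\<dots> = (\<forall>k\<in>{0,1,2,3}. P k)" by (simp only: h)
  also have "\<dots> = (P 0 \<and> P 1 \<and> P 2 \<and> P 3)" by simp
  finally show ?thesis .
qed
lemma prod4: "(\<Prod>k<(4::nat). f k) = f 0 * f 1 * f 2 * f 3"
proof -
  have h: "{..<(4::nat)} = {0,1,2,3}" by auto
  show ?thesis by (simp only: h) (simp add: mult_ac)
qed

definition cb :: "real \<Rightarrow> bool list \<Rightarrow> nat \<Rightarrow> complex" where
  "cb \<gamma> x b = (if (\<forall>k<4. \<not> x ! (4*b+k)) then complex_of_real (cos (\<gamma>/4))
     else if (\<forall>k<4. x ! (4*b+k)) then complex_of_real (sin (\<gamma>/4)) else 0)"

lemma chi_cb: "chi n \<gamma> x = (\<Prod>b<n div 4. cb \<gamma> x b)"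
  unfolding chi_def cb_def by (rule refl)

lemma chi_append:
  assumes x: "length x = 4*m" and y: "length y = 4"
  shows "chi (4*m+4) \<gamma> (x@y) = chi (4*m) \<gamma> x * chi 4 \<gamma> y"
proof -
  have d: "(4*m+4) div 4 = Suc m" "(4*m) div 4 = m" by auto
  have a: "(x@y)!(4*b+k) = x!(4*b+k)" if "b < m" "k < 4" for b k
    using that x by (simp add: nth_append)
  have b: "(x@y)!(4*m+k) = y!k" for k
    using x by (simp add: nth_append)
  have c1: "cb \<gamma> (x@y) b = cb \<gamma> x b" if "b < m" for b
  proof -
    have eqs: "(\<forall>k<4. \<not> (x@y)!(4*b+k)) = (\<forall>k<4. \<not> x!(4*b+k))" "(\<forall>k<4. (x@y)!(4*b+k)) = (\<forall>k<4. x!(4*b+k))"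
      using a[OF that] by auto
    show ?thesis unfolding cb_def by (simp only: eqs)
  qed
  have c2: "cb \<gamma> (x@y) m = cb \<gamma> y 0"
  proof -
    have eqs: "(\<forall>k<4. \<not> (x@y)!(4*m+k)) = (\<forall>k<4. \<not> y!(4*0+k))" "(\<forall>k<4. (x@y)!(4*m+k)) = (\<forall>k<4. y!(4*0+k))"
      using b by auto
    show ?thesis unfolding cb_def by (simp only: eqs)
  qed
  show ?thesis unfolding chi_cb d using c1 c2 by simp
qed

lemma pauli_append:
  assumes "length p = n" "length x = n" "length z = n" "length B = k" "length x2 = k" "length z2 = k"
  shows "pauli_op (n+k) (p@B) (x@x2) (z@z2) = pauli_op n p x z * pauli_op k B x2 z2"
  unfolding pauli_op_def prod_lessThan_add using assms
  by (auto simp: nth_append intro!: arg_cong2[where f="(*)"] prod.cong)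

lemma E_append:
  assumes p: "length p = 4*m" and B: "length B = 4"
  shows "E (4*m+4) \<gamma> (p@B) = E (4*m) \<gamma> p * E 4 \<gamma> B"
proof -
  have "E (4*m+4) \<gamma> (p@B) = (\<Sum>x\<in>bitstrings (4*m). \<Sum>x2\<in>bitstrings 4. \<Sum>z\<in>bitstrings (4*m). \<Sum>z2\<in>bitstrings 4.
     (chi (4*m) \<gamma> x * pauli_op (4*m) p x z * chi (4*m) \<gamma> z) * (chi 4 \<gamma> x2 * pauli_op 4 B x2 z2 * chi 4 \<gamma> z2))"
    unfolding E_def sum_bitstrings_add
  proof (intro sum.cong refl)
    fix x x2 z z2 assume "x \<in> bitstrings (4*m)" "x2 \<in> bitstrings 4" "z \<in> bitstrings (4*m)" "z2 \<in> bitstrings 4"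
    then have l: "length x = 4*m" "length x2 = 4" "length z = 4*m" "length z2 = 4" by (auto simp: bitstrings_def)
    show "chi (4*m+4) \<gamma> (x@x2) * pauli_op (4*m+4) (p@B) (x@x2) (z@z2) * chi (4*m+4) \<gamma> (z@z2)
      = (chi (4*m) \<gamma> x * pauli_op (4*m) p x z * chi (4*m) \<gamma> z) * (chi 4 \<gamma> x2 * pauli_op 4 B x2 z2 * chi 4 \<gamma> z2)"
      unfolding chi_append[OF l(1,2)] chi_append[OF l(3,4)] pauli_append[OF p l(1,3) B l(2,4)]
      by (simp add: mult_ac)
  qed
  also have "\<dots> = E (4*m) \<gamma> p * E 4 \<gamma> B"
    unfolding E_def by (simp add: sum_product)
  finally show ?thesis .
qed

lemma E_0: "E 0 \<gamma> [] = 1"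
  by (simp add: E_def bitstrings_0 chi_def pauli_op_def)

lemma bs4_eq: "x \<in> bitstrings 4 \<Longrightarrow> \<exists>a b c d. x = [a,b,c,d]"
  by (auto simp: bitstrings_def length_Suc_conv numeral_eq_Suc)

lemma chi4: "x \<in> bitstrings 4 \<Longrightarrow> chi 4 \<gamma> x = (if x = [False,False,False,False] then complex_of_real (cos (\<gamma>/4))
   else if x = [True,True,True,True] then complex_of_real (sin (\<gamma>/4)) else 0)"
  by (drule bs4_eq) (auto simp: chi_cb cb_def all4)

lemma chi4_F: "chi 4 \<gamma> [False,False,False,False] = complex_of_real (cos (\<gamma>/4))"
  by (simp add: chi_cb cb_def all4)
lemma chi4_T: "chi 4 \<gamma> [True,True,True,True] = complex_of_real (sin (\<gamma>/4))"
  by (simp add: chi_cb cb_def all4)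

lemma sum_bs4:
  assumes "\<And>x. x \<in> bitstrings 4 \<Longrightarrow> x \<noteq> [False,False,False,False] \<Longrightarrow> x \<noteq> [True,True,True,True] \<Longrightarrow> g x = 0"
  shows "(\<Sum>x\<in>bitstrings 4. g x) = g [False,False,False,False] + g [True,True,True,True]"
proof -
  have "(\<Sum>x\<in>bitstrings 4. g x) = (\<Sum>x\<in>{[False,False,False,False],[True,True,True,True]}. g x)"
  proof (rule sum.mono_neutral_right)
    show "finite (bitstrings 4)" by simp
    show "{[False, False, False, False], [True, True, True, True]} \<subseteq> bitstrings 4" by (simp add: bitstrings_def)
    show "\<forall>i\<in>bitstrings 4 - {[False, False, False, False], [True, True, True, True]}. g i = 0"
      using assms by blast
  qed
  then show ?thesis by simp
qed

definition D4 :: "nat list \<Rightarrow> bool \<Rightarrow> bool \<Rightarrow> complex" where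
  "D4 B a b = (\<Prod>k<4. sigma (B!k) a b)"

lemma E4: "E 4 \<gamma> B = complex_of_real (cos (\<gamma>/4)) * complex_of_real (cos (\<gamma>/4)) * D4 B False False
  + complex_of_real (cos (\<gamma>/4)) * complex_of_real (sin (\<gamma>/4)) * D4 B False True
  + complex_of_real (sin (\<gamma>/4)) * complex_of_real (cos (\<gamma>/4)) * D4 B True False
  + complex_of_real (sin (\<gamma>/4)) * complex_of_real (sin (\<gamma>/4)) * D4 B True True"
proof -
  have po: "pauli_op 4 B [a,a,a,a] [b,b,b,b] = D4 B a b" for a b
    by (simp add: pauli_op_def D4_def prod4)
  have "E 4 \<gamma> B = (\<Sum>x\<in>bitstrings 4. \<Sum>z\<in>bitstrings 4. chi 4 \<gamma> x * pauli_op 4 B x z * chi 4 \<gamma> z)"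
    by (simp add: E_def)
  also have "\<dots> = (\<Sum>x\<in>bitstrings 4. chi 4 \<gamma> x * pauli_op 4 B x [False,False,False,False] * complex_of_real (cos (\<gamma>/4))
     + chi 4 \<gamma> x * pauli_op 4 B x [True,True,True,True] * complex_of_real (sin (\<gamma>/4)))"
  proof (rule sum.cong[OF refl])
    fix x assume "x \<in> bitstrings 4"
    have "(\<Sum>z\<in>bitstrings 4. chi 4 \<gamma> x * pauli_op 4 B x z * chi 4 \<gamma> z) = chi 4 \<gamma> x * pauli_op 4 B x [False,False,False,False] * chi 4 \<gamma> [False,False,False,False]
     + chi 4 \<gamma> x * pauli_op 4 B x [True,True,True,True] * chi 4 \<gamma> [True,True,True,True]"
      by (rule sum_bs4) (simp add: chi4)
    then show "(\<Sum>z\<in>bitstrings 4. chi 4 \<gamma> x * pauli_op 4 B x z * chi 4 \<gamma> z) = chi 4 \<gamma> x * pauli_op 4 B x [False,False,False,False] * complex_of_real (cos (\<gamma>/4))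
     + chi 4 \<gamma> x * pauli_op 4 B x [True,True,True,True] * complex_of_real (sin (\<gamma>/4))"
      by (simp only: chi4_F chi4_T)
  qed
  also have "\<dots> = chi 4 \<gamma> [False,False,False,False] * pauli_op 4 B [False,False,False,False] [False,False,False,False] * complex_of_real (cos (\<gamma>/4))
     + chi 4 \<gamma> [False,False,False,False] * pauli_op 4 B [False,False,False,False] [True,True,True,True] * complex_of_real (sin (\<gamma>/4))
     + (chi 4 \<gamma> [True,True,True,True] * pauli_op 4 B [True,True,True,True] [False,False,False,False] * complex_of_real (cos (\<gamma>/4))
     + chi 4 \<gamma> [True,True,True,True] * pauli_op 4 B [True,True,True,True] [True,True,True,True] * complex_of_real (sin (\<gamma>/4)))"
    by (rule sum_bs4) (simp add: chi4)
  also have "\<dots> = complex_of_real (cos (\<gamma>/4)) * D4 B False False * complex_of_real (cos (\<gamma>/4))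
     + complex_of_real (cos (\<gamma>/4)) * D4 B False True * complex_of_real (sin (\<gamma>/4))
     + (complex_of_real (sin (\<gamma>/4)) * D4 B True False * complex_of_real (cos (\<gamma>/4))
     + complex_of_real (sin (\<gamma>/4)) * D4 B True True * complex_of_real (sin (\<gamma>/4)))"
    by (simp only: chi4_F chi4_T po)
  finally show ?thesis by (simp only: mult_ac add_ac)
qed

lemma PS_0: "pauli_strings 0 = {[]}"
  by (auto simp: pauli_strings_def)

lemma PS_Suc: "pauli_strings (Suc n) = (\<lambda>(a,p). a # p) ` ({..<4} \<times> pauli_strings n)"
proof
  show "pauli_strings (Suc n) \<subseteq> (\<lambda>(a,p). a # p) ` ({..<4} \<times> pauli_strings n)"
  proof
    fix z assume z: "z \<in> pauli_strings (Suc n)"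
    then obtain a p where "z = a # p" by (cases z) (auto simp: pauli_strings_def)
    then show "z \<in> (\<lambda>(a,p). a # p) ` ({..<4} \<times> pauli_strings n)"
      using z by (auto simp: pauli_strings_def image_iff)
  qed
qed (auto simp: pauli_strings_def)

lemma finite_PS[simp]: "finite (pauli_strings n)"
  by (induction n) (auto simp: PS_0 PS_Suc)

lemma sum_PS_Suc: "(\<Sum>p\<in>pauli_strings (Suc n). f p) = (\<Sum>a<4. \<Sum>p\<in>pauli_strings n. f (a # p))"
proof -
  have "inj_on (\<lambda>(a,p). a # p) ({..<4} \<times> pauli_strings n)" by (auto simp: inj_on_def)
  then show ?thesis unfolding PS_Suc
    by (simp add: sum.reindex sum.cartesian_product split_def)
qed

lemma sum4: "(\<Sum>k<(4::nat). f k) = f 0 + f 1 + f 2 + f 3"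
proof -
  have h: "{..<(4::nat)} = {0,1,2,3}" by auto
  show ?thesis by (simp only: h) (simp add: add_ac)
qed

lemma sum_PS4: "(\<Sum>p\<in>pauli_strings 4. f p) = (\<Sum>a<4. \<Sum>b<4. \<Sum>c<4. \<Sum>d<4. f [a,b,c,d])"
proof -
  have "pauli_strings 4 = pauli_strings (Suc (Suc (Suc (Suc 0))))" by (simp add: numeral_eq_Suc)
  then show ?thesis by (simp only: sum_PS_Suc PS_0) simp
qed

lemma PS_append: "pauli_strings (n + k) = (\<lambda>(x,y). x @ y) ` (pauli_strings n \<times> pauli_strings k)"
proof
  show "pauli_strings (n + k) \<subseteq> (\<lambda>(x,y). x @ y) ` (pauli_strings n \<times> pauli_strings k)"
  proof
    fix z assume z: "z \<in> pauli_strings (n + k)"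
    then have "z = (\<lambda>(x,y). x @ y) (take n z, drop n z)" "(take n z, drop n z) \<in> pauli_strings n \<times> pauli_strings k"
      by (auto simp: pauli_strings_def dest: in_set_takeD in_set_dropD)
    then show "z \<in> (\<lambda>(x,y). x @ y) ` (pauli_strings n \<times> pauli_strings k)" by blast
  qed
qed (auto simp: pauli_strings_def subset_iff)

lemma sum_PS_append:
  "(\<Sum>z\<in>pauli_strings (n+k). f z) = (\<Sum>x\<in>pauli_strings n. \<Sum>y\<in>pauli_strings k. f (x @ y))"
proof -
  have "inj_on (\<lambda>(x,y). x @ y) (pauli_strings n \<times> pauli_strings k)"
    by (auto simp: inj_on_def pauli_strings_def)
  then show ?thesis unfolding PS_append by (simp add: sum.reindex sum.cartesian_product split_def)
qed

lemma deg_append: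
  assumes B: "length B = k" and ev: "\<not> odd (\<Sum>j<k. of_bool (xb (B!j)) :: nat)"
  shows "deg (p @ B) = deg p + deg B"
proof -
  let ?n = "length p"
  have t1: "tpar (p@B) q = tpar p q" if "q < ?n" for q
  proof -
    have "(\<Sum>q'<?n+k. if q < q' then of_bool (xb ((p@B)!q')) else (0::nat))
       = (\<Sum>q'<?n. if q < q' then of_bool (xb (p!q')) else 0) + (\<Sum>j<k. of_bool (xb (B!j)))"
      unfolding sum_lessThan_add using that by (auto simp: nth_append intro!: sum.cong)
    then show ?thesis unfolding tpar_def using B ev by simp
  qed
  have t2: "tpar (p@B) (?n + j) = tpar B j" for j
  proof -
    have "(\<Sum>q'<?n+k. if ?n + j < q' then of_bool (xb ((p@B)!q')) else (0::nat))
       = (\<Sum>j'<k. if j < j' then of_bool (xb (B!j')) else 0)"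
      unfolding sum_lessThan_add by (auto simp: nth_append intro!: sum.cong)
    then show ?thesis unfolding tpar_def using B by simp
  qed
  show ?thesis
    unfolding deg_def length_append B sum_lessThan_add
    by (auto simp: nth_append t1 t2 B intro!: sum.cong arg_cong2[where f="(+)"])
qed

lemma D4_list: "D4 [a,b,c,d] u v = sigma a u v * sigma b u v * sigma c u v * sigma d u v"
  by (simp add: D4_def prod4)

lemma G1_coeff:
  fixes C S :: complex
  assumes "C = complex_of_real (cos (\<gamma>/4))" "S = complex_of_real (sin (\<gamma>/4))"
  shows "coeff (\<Sum>B\<in>pauli_strings 4. monom ((E 4 \<gamma> B)^2) (deg B)) k =
    (if k = 0 then (C^2+S^2)^2 else 0) + (if k = 2 then 4*(C^2-S^2)^2 else 0)
  + (if k = 4 then 6*(C^2+S^2)^2 + 32*C^2*S^2 else 0) + (if k = 6 then 4*(C^2-S^2)^2 else 0)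
  + (if k = 8 then (C^2+S^2)^2 else 0)"
  unfolding coeff_sum coeff_monom sum_PS4 E4 D4_list assms[symmetric]
  apply (simp add: sum4 deg_def tpar_def ldeg_def xb_def zb_def sigma_def)
  by (auto simp: power2_eq_square algebra_simps)

lemma sigma_diag0: "xb a \<Longrightarrow> sigma a u u = 0"
  by (auto simp: xb_def sigma_def)
lemma sigma_off0: "a < 4 \<Longrightarrow> \<not> xb a \<Longrightarrow> u \<noteq> v \<Longrightarrow> sigma a u v = 0"
  using less4_cases[of a] by (auto simp: xb_def sigma_def)

lemma E4_zero_odd:
  assumes B: "B \<in> pauli_strings 4" and od: "odd (\<Sum>j<4. of_bool (xb (B!j)) :: nat)"
  shows "E 4 \<gamma> B = 0"
proof -
  have ex1: "\<exists>j<4. xb (B!j)"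
  proof (rule ccontr)
    assume "\<not> ?thesis"
    then have "(\<Sum>j<4. of_bool (xb (B!j)) :: nat) = 0" by simp
    then show False using od by simp
  qed
  have ex2: "\<exists>j<4. \<not> xb (B!j)"
  proof (rule ccontr)
    assume "\<not> ?thesis"
    then have "(\<Sum>j<4. of_bool (xb (B!j)) :: nat) = (\<Sum>j<(4::nat). (1::nat))" by (intro sum.cong) auto
    then show False using od by simp
  qed
  have "D4 B u v = 0" for u v
  proof (cases "u = v")
    case True
    then show ?thesis using ex1 unfolding D4_def by (auto intro!: prod_zero sigma_diag0)
  next
    case False
    then show ?thesis using ex2 PS_lt[OF B] unfolding D4_def by (auto intro!: prod_zero sigma_off0)
  qed
  then show ?thesis by (simp add: E4)
qed

definition G :: "real \<Rightarrow> nat \<Rightarrow> complex poly" where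
  "G \<gamma> m = (\<Sum>p\<in>pauli_strings (4*m). monom ((E (4*m) \<gamma> p)^2) (deg p))"

lemma G_Suc: "G \<gamma> (Suc m) = G \<gamma> m * G \<gamma> 1"
proof -
  have "G \<gamma> (Suc m) = (\<Sum>p\<in>pauli_strings (4*m). \<Sum>B\<in>pauli_strings 4. monom ((E (4*m+4) \<gamma> (p@B))^2) (deg (p@B)))"
  proof -
    have e: "4 * Suc m = 4*m + 4" by simp
    show ?thesis by (simp only: G_def e sum_PS_append)
  qed
  also have "\<dots> = (\<Sum>p\<in>pauli_strings (4*m). \<Sum>B\<in>pauli_strings 4. monom ((E (4*m) \<gamma> p)^2) (deg p) * monom ((E 4 \<gamma> B)^2) (deg B))"
  proof (intro sum.cong refl)
    fix p B assume p: "p \<in> pauli_strings (4*m)" and B: "B \<in> pauli_strings 4"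
    have e: "E (4*m+4) \<gamma> (p@B) = E (4*m) \<gamma> p * E 4 \<gamma> B"
      using E_append PS_len[OF p] PS_len[OF B] by blast
    show "monom ((E (4*m+4) \<gamma> (p@B))^2) (deg (p@B)) = monom ((E (4*m) \<gamma> p)^2) (deg p) * monom ((E 4 \<gamma> B)^2) (deg B)"
    proof (cases "E 4 \<gamma> B = 0")
      case True then show ?thesis by (simp add: e)
    next
      case False
      then have "\<not> odd (\<Sum>j<4. of_bool (xb (B!j)) :: nat)" using E4_zero_odd[OF B] by blast
      then have "deg (p@B) = deg p + deg B" using deg_append PS_len[OF B] by blast
      then show ?thesis by (simp add: e mult_monom power_mult_distrib)
    qed
  qed
  also have "\<dots> = G \<gamma> m * G \<gamma> 1"
    unfolding G_def by (simp add: sum_product)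
  finally show ?thesis .
qed

lemma G_0: "G \<gamma> 0 = 1"
  by (simp add: G_def PS_0 E_0 deg_def monom_eq_1)

lemma G_pow: "G \<gamma> m = (G \<gamma> 1) ^ m"
proof (induction m)
  case 0 then show ?case by (simp add: G_0)
next
  case (Suc m)
  have "G \<gamma> (Suc m) = G \<gamma> m * G \<gamma> 1" by (rule G_Suc)
  then show ?case using Suc by simp
qed

definition Q :: "real \<Rightarrow> complex poly" where
  "Q \<gamma> = monom 1 0 + monom (of_real (N2 \<gamma>)) 2 + monom (of_real (N4 \<gamma>)) 4 + monom (of_real (N6 \<gamma>)) 6 + monom (of_real N8) 8"

lemma G1_Q: "G \<gamma> 1 = Q \<gamma>"
proof (rule poly_eqI)
  fix k
  define C where "C = complex_of_real (cos (\<gamma>/4))"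
  define S where "S = complex_of_real (sin (\<gamma>/4))"
  have h1: "C^2 + S^2 = 1" unfolding C_def S_def
    by (metis of_real_add of_real_power of_real_1 sin_cos_squared_add add.commute)
  have h2: "complex_of_real (cos (\<gamma>/2)) = C^2 - S^2" unfolding C_def S_def
  proof -
    have "cos (\<gamma>/2) = cos (2*(\<gamma>/4))" by simp
    also have "\<dots> = (cos (\<gamma>/4))^2 - (sin (\<gamma>/4))^2" by (rule cos_double)
    finally show "complex_of_real (cos (\<gamma>/2)) = (complex_of_real (cos (\<gamma>/4)))^2 - (complex_of_real (sin (\<gamma>/4)))^2"
      by simp
  qed
  have h3: "complex_of_real (sin (\<gamma>/2)) = 2*C*S" unfolding C_def S_def
  proof -
    have "sin (\<gamma>/2) = sin (2*(\<gamma>/4))" by simp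
    also have "\<dots> = 2 * sin (\<gamma>/4) * cos (\<gamma>/4)" by (rule sin_double)
    finally show "complex_of_real (sin (\<gamma>/2)) = 2 * complex_of_real (cos (\<gamma>/4)) * complex_of_real (sin (\<gamma>/4))"
      by simp
  qed
  have n2: "complex_of_real (N2 \<gamma>) = 4*(C^2-S^2)^2" unfolding N2_def using h2 by simp
  have n6: "complex_of_real (N6 \<gamma>) = 4*(C^2-S^2)^2" unfolding N6_def using h2 by simp
  have n4: "complex_of_real (N4 \<gamma>) = 6*(C^2+S^2)^2 + 32*C^2*S^2" unfolding N4_def using h3 h1
    by (simp add: power_mult_distrib)
  have "coeff (G \<gamma> 1) k = (if k = 0 then (C^2+S^2)^2 else 0) + (if k = 2 then 4*(C^2-S^2)^2 else 0)
    + (if k = 4 then 6*(C^2+S^2)^2 + 32*C^2*S^2 else 0) + (if k = 6 then 4*(C^2-S^2)^2 else 0)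
    + (if k = 8 then (C^2+S^2)^2 else 0)"
    unfolding G_def using G1_coeff[OF C_def S_def] by simp
  also have "\<dots> = coeff (Q \<gamma>) k"
    unfolding Q_def using h1 n2 n4 n6 by (simp add: N8_def)
  finally show "coeff (G \<gamma> 1) k = coeff (Q \<gamma>) k" .
qed

definition T2 :: "nat \<Rightarrow> (nat \<times> nat) set" where "T2 k = {(a,b). a + b = k}"
definition T3 :: "nat \<Rightarrow> (nat \<times> nat \<times> nat) set" where "T3 k = {(a,b,c). a + b + c = k}"
definition T4 :: "nat \<Rightarrow> (nat \<times> nat \<times> nat \<times> nat) set" where "T4 k = {(a,b,c,d). a + b + c + d = k}"
definition T5 :: "nat \<Rightarrow> (nat \<times> nat \<times> nat \<times> nat \<times> nat) set" where "T5 k = {(a,b,c,d,e). a + b + c + d + e = k}"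

lemma T2_eq: "T2 k = (\<lambda>i. (i, k - i)) ` {..k}"
  by (auto simp: T2_def image_iff)
lemma T3_eq: "T3 k = Sigma {..k} (\<lambda>i. T2 (k - i))"
  by (auto simp: T3_def T2_def)
lemma T4_eq: "T4 k = Sigma {..k} (\<lambda>i. T3 (k - i))"
  by (auto simp: T4_def T3_def)
lemma T5_eq: "T5 k = Sigma {..k} (\<lambda>i. T4 (k - i))"
  by (auto simp: T5_def T4_def)

lemma fin_T2[simp]: "finite (T2 k)" by (simp add: T2_eq)
lemma fin_T3[simp]: "finite (T3 k)" by (simp add: T3_eq)
lemma fin_T4[simp]: "finite (T4 k)" by (simp add: T4_eq)
lemma fin_T5[simp]: "finite (T5 k)" by (simp add: T5_eq)

lemma sum_Sigma':
  "finite A \<Longrightarrow> (\<forall>x\<in>A. finite (B x)) \<Longrightarrow> sum f (Sigma A B) = (\<Sum>x\<in>A. \<Sum>y\<in>B x. f (x,y))"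
  by (simp add: sum.Sigma)

lemma sum_T2: "sum f (T2 k) = (\<Sum>i\<le>k. f (i, k - i))"
proof -
  have "inj_on (\<lambda>i. (i, k - i)) {..k}" by (auto simp: inj_on_def)
  then show ?thesis by (simp add: T2_eq sum.reindex)
qed
lemma sum_T3: "sum f (T3 k) = (\<Sum>i\<le>k. \<Sum>j\<le>k-i. f (i, j, k - i - j))"
  by (simp add: T3_eq sum_Sigma' sum_T2)
lemma sum_T4: "sum f (T4 k) = (\<Sum>i\<le>k. \<Sum>j\<le>k-i. \<Sum>l\<le>k-i-j. f (i, j, l, k - i - j - l))"
  by (simp add: T4_eq sum_Sigma' sum_T3)
lemma sum_T5: "sum f (T5 k) = (\<Sum>i\<le>k. \<Sum>j\<le>k-i. \<Sum>l\<le>k-i-j. \<Sum>r\<le>k-i-j-l. f (i, j, l, r, k - i - j - l - r))"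
  by (simp add: T5_eq sum_Sigma' sum_T4)

definition M5 :: "nat \<Rightarrow> nat \<Rightarrow> nat \<Rightarrow> nat \<Rightarrow> nat \<Rightarrow> nat" where
  "M5 m i j l r = (m choose i) * ((m - i) choose j) * ((m - i - j) choose l) * ((m - i - j - l) choose r)"

lemma multinomial5:
  fixes x0 x1 x2 x3 x4 :: "'a::comm_semiring_1"
  shows "(x0 + x1 + x2 + x3 + x4) ^ m = (\<Sum>(i,j,l,r,s)\<in>T5 m. of_nat (M5 m i j l r) * x0^i * x1^j * x2^l * x3^r * x4^s)"
proof -
  have "(x0 + x1 + x2 + x3 + x4) ^ m = (x0 + (x1 + (x2 + (x3 + x4)))) ^ m" by (simp add: add_ac)
  also have "\<dots> = (\<Sum>i\<le>m. of_nat (m choose i) * x0^i * (\<Sum>j\<le>m-i. of_nat ((m-i) choose j) * x1^j *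
      (\<Sum>l\<le>m-i-j. of_nat ((m-i-j) choose l) * x2^l * (\<Sum>r\<le>m-i-j-l. of_nat ((m-i-j-l) choose r) * x3^r * x4^(m-i-j-l-r)))))"
    by (simp only: binomial_ring atLeast0AtMost)
  also have "\<dots> = (\<Sum>i\<le>m. \<Sum>j\<le>m-i. \<Sum>l\<le>m-i-j. \<Sum>r\<le>m-i-j-l.
      of_nat (M5 m i j l r) * x0^i * x1^j * x2^l * x3^r * x4^(m-i-j-l-r))"
    by (simp add: sum_distrib_left M5_def mult_ac)
  also have "\<dots> = (\<Sum>(i,j,l,r,s)\<in>T5 m. of_nat (M5 m i j l r) * x0^i * x1^j * x2^l * x3^r * x4^s)"
    by (simp add: sum_T5)
  finally show ?thesis .
qed

lemma M5_fact:
  assumes "i + j + l + r + s = m"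
  shows "(of_nat (M5 m i j l r) :: 'a::field_char_0) = fact m / (fact i * fact j * fact l * fact r * fact s)"
proof -
  have s: "s = m - i - j - l - r" using assms by simp
  have le: "i \<le> m" "j \<le> m - i" "l \<le> m - i - j" "r \<le> m - i - j - l" using assms by auto
  show ?thesis unfolding M5_def s of_nat_mult
    using le by (simp add: binomial_fact field_simps)
qed

lemma coeff_Qpow:
  fixes a b c d :: complex
  shows "coeff ((monom 1 0 + monom a 2 + monom b 4 + monom c 6 + monom d 8) ^ m) \<alpha>
    = (\<Sum>(i0, i2, i4, i6, i8)\<in>{(i0::nat, i2::nat, i4::nat, i6::nat, i8::nat).
               i0 + i2 + i4 + i6 + i8 = m \<and> 2*i2 + 4*i4 + 6*i6 + 8*i8 = \<alpha>}.
             fact m / (fact i0 * fact i2 * fact i4 * fact i6 * fact i8) * a ^ i2 * b ^ i4 * c ^ i6 * d ^ i8)"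
proof -
  have "coeff ((monom 1 0 + monom a 2 + monom b 4 + monom c 6 + monom d 8) ^ m) \<alpha>
    = (\<Sum>(i,j,l,r,s)\<in>T5 m. if 2*j + 4*l + 6*r + 8*s = \<alpha> then of_nat (M5 m i j l r) * a^j * b^l * c^r * d^s else 0)"
    unfolding multinomial5 coeff_sum
    by (intro sum.cong refl) (auto simp: monom_power mult_monom of_nat_monom mult_ac)
  also have "\<dots> = (\<Sum>(i,j,l,r,s)\<in>{t\<in>T5 m. (case t of (i,j,l,r,s) \<Rightarrow> 2*j + 4*l + 6*r + 8*s = \<alpha>)}. of_nat (M5 m i j l r) * a^j * b^l * c^r * d^s)"
    by (subst sum.inter_filter) (auto simp: split_def intro!: sum.cong)
  also have "\<dots> = (\<Sum>(i0, i2, i4, i6, i8)\<in>{(i0::nat, i2::nat, i4::nat, i6::nat, i8::nat).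
               i0 + i2 + i4 + i6 + i8 = m \<and> 2*i2 + 4*i4 + 6*i6 + 8*i8 = \<alpha>}.
             fact m / (fact i0 * fact i2 * fact i4 * fact i6 * fact i8) * a ^ i2 * b ^ i4 * c ^ i6 * d ^ i8)"
  proof -
    have e: "{t\<in>T5 m. (case t of (i,j,l,r,s) \<Rightarrow> 2*j + 4*l + 6*r + 8*s = \<alpha>)} = {(i0::nat, i2::nat, i4::nat, i6::nat, i8::nat).
               i0 + i2 + i4 + i6 + i8 = m \<and> 2*i2 + 4*i4 + 6*i6 + 8*i8 = \<alpha>}"
      by (auto simp: T5_def)
    show ?thesis unfolding e
      by (intro sum.cong refl) (auto simp: M5_fact)
  qed
  finally show ?thesis .
qed

theorem mainTheorem10:
  fixes n :: nat and \<gamma> :: real and \<alpha> :: nat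
  assumes "n > 0" and "4 dvd n" and "\<alpha> \<le> 2 * n"
  shows "P_alpha n \<alpha> (rho_gamma n \<gamma>) = complex_of_real
          (1 / 2 ^ n * (\<Sum>(i0, i2, i4, i6, i8)\<in>{(i0::nat, i2::nat, i4::nat, i6::nat, i8::nat).
               i0 + i2 + i4 + i6 + i8 = n div 4 \<and> 2*i2 + 4*i4 + 6*i6 + 8*i8 = \<alpha>}.
             fact (n div 4) / (fact i0 * fact i2 * fact i4 * fact i6 * fact i8)
             * N2 \<gamma> ^ i2 * N4 \<gamma> ^ i4 * N6 \<gamma> ^ i6 * N8 ^ i8))
       \<and> (odd \<alpha> \<longrightarrow> P_alpha n \<alpha> (rho_gamma n \<gamma>) = 0)"
proof -
  define m where "m = n div 4"
  have nm: "n = 4 * m" using assms(2) unfolding m_def by auto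
  define c where "c = complex_of_real (sqrt (2 ^ n))"
  have c2: "c ^ 2 = 2 ^ n"
  proof -
    have "c ^ 2 = complex_of_real ((sqrt (2 ^ n)) ^ 2)" unfolding c_def by (simp only: of_real_power)
    also have "\<dots> = complex_of_real (2 ^ n)" by simp
    also have "\<dots> = 2 ^ n" by simp
    finally show ?thesis .
  qed
  define SS where "SS = {(i0::nat, i2::nat, i4::nat, i6::nat, i8::nat).
               i0 + i2 + i4 + i6 + i8 = n div 4 \<and> 2*i2 + 4*i4 + 6*i6 + 8*i8 = \<alpha>}"
  have main: "P_alpha n \<alpha> (rho_gamma n \<gamma>) = complex_of_real
          (1 / 2 ^ n * (\<Sum>(i0, i2, i4, i6, i8)\<in>SS.
             fact (n div 4) / (fact i0 * fact i2 * fact i4 * fact i6 * fact i8)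
             * N2 \<gamma> ^ i2 * N4 \<gamma> ^ i4 * N6 \<gamma> ^ i6 * N8 ^ i8))"
  proof -
    have "P_alpha n \<alpha> (rho_gamma n \<gamma>) = (\<Sum>p\<in>{p\<in>pauli_strings n. deg p = \<alpha>}. (E n \<gamma> p / c) ^ 2)"
    proof -
      have "{p\<in>pauli_strings n. in_L n \<alpha> (pauli_op n p)} = {p\<in>pauli_strings n. deg p = \<alpha>}"
        using inL_iff by auto
      then show ?thesis unfolding P_alpha_def c_def[symmetric] trace_eq by simp
    qed
    also have "\<dots> = (\<Sum>p\<in>pauli_strings n. if deg p = \<alpha> then (E n \<gamma> p)^2 else 0) / 2^n"
      by (simp add: sum.inter_filter power_divide c2 sum_divide_distrib if_distrib[of "\<lambda>x. x / 2^n"] cong: if_cong)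
    also have "\<dots> = coeff (G \<gamma> m) \<alpha> / 2^n"
      unfolding G_def coeff_sum nm by simp
    also have "\<dots> = coeff ((Q \<gamma>)^m) \<alpha> / 2^n"
      by (subst G_pow) (simp only: G1_Q)
    also have "\<dots> = (\<Sum>(i0, i2, i4, i6, i8)\<in>SS.
             fact m / (fact i0 * fact i2 * fact i4 * fact i6 * fact i8) * complex_of_real (N2 \<gamma>) ^ i2
             * complex_of_real (N4 \<gamma>) ^ i4 * complex_of_real (N6 \<gamma>) ^ i6 * complex_of_real N8 ^ i8) / 2^n"
      unfolding Q_def coeff_Qpow SS_def m_def by simp
    also have "\<dots> = complex_of_real
          (1 / 2 ^ n * (\<Sum>(i0, i2, i4, i6, i8)\<in>SS.
             fact (n div 4) / (fact i0 * fact i2 * fact i4 * fact i6 * fact i8)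
             * N2 \<gamma> ^ i2 * N4 \<gamma> ^ i4 * N6 \<gamma> ^ i6 * N8 ^ i8))"
      unfolding m_def by (simp add: of_real_sum split_def)
    finally show ?thesis .
  qed
  moreover have "odd \<alpha> \<longrightarrow> SS = {}"
    unfolding SS_def by auto
  ultimately show ?thesis unfolding SS_def[symmetric] by auto
qed

end
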